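(* Let $X_0=(y_0,U_0,H_0,r_0,V_0)\in\mathcal{F}_i^\alpha$ and let $X(t)$ be the $\alpha$-dissipative solution with initial data $X_0$. Let $c>0$ be such that $c\le y_{0,\xi}(\xi)+H_{0,\xi}(\xi)$ for a.e. $\xi\in\mathbb{R}$. Then for every $t\ge0$, $$\mathrm{m}\big(\{\xi\in\mathbb{R}:\tau(\xi)\le t\}\big)\le\frac{1+\frac14t^2}{c}\|H_0\|_\infty,$$ where $\mathrm{m}$ denotes Lebesgue measure.
   Context: Fix $\alpha\in W^{1,\infty}(\mathbb{R})$ with either $0\le\alpha(x)<1$ for all $x\in\mathbb{R}$, or $\alpha(x)=1$ for all $x\in\mathbb{R}$. $E_1=\{f\in L^\infty(\mathbb{R}): f'\in L^2(\mathbb{R}),\ \lim_{x\to-\infty}f(x)=0\}$, $E_2=\{f\in L^\infty(\mathbb{R}): f'\in L^2(\mathbb{R})\}$, normed by $\|f\|_\infty+\|f'\|_2$; $B=E_2\times E_2\times E_1\times L^2(\mathbb{R})\times E_1$. $\mathcal{F}^\alpha$ is the set of $X=(y,U,H,r,V)$ with $(y-\mathrm{id},U,H,r,V)\in B$ such that: (i) $y-\mathrm{id},U,H,V\in W^{1,\infty}$, $r\in L^\infty$; (ii) $y_\xi\ge0$, $H_\xi\ge0$ and $y_\xi+H_\xi>c'$ a.e. for some constant $c'>0$; (iii) $y_\xi V_\xi=U_\xi^2+r^2$ a.e.; (iv) $0\le V_\xi\le H_\xi$ a.e.; (v) if $0\le\alpha<1$, there is $\kappa:\mathbb{R}\to(0,1]$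 with $V_\xi=\kappa(y)H_\xi$ a.e. and $\kappa(y(\xi))=1$ whenever $U_\xi(\xi)<0$ or $r(\xi)\ne0$; (vi) if $\alpha\equiv1$, a.e. $y_\xi=0\Rightarrow V_\xi=0$ and $y_\xi>0\Rightarrow V_\xi=H_\xi$. $\mathcal{F}_i^\alpha=\{X\in\mathcal{F}^\alpha:V=H\}$. For $X_0\in\mathcal{F}_i^\alpha$ the breaking time is $\tau(\xi)=0$ if $y_{0,\xi}(\xi)=0$, $\tau(\xi)=-2U_{0,\xi}(\xi)/H_{0,\xi}(\xi)$ if $r_0(\xi)=0$ and $U_{0,\xi}(\xi)<0$, and $\tau(\xi)=\infty$ otherwise. The $\alpha$-dissipative solution with data $X_0$ is the unique $X(t)=(y,U,H,r,V)(t)$, $X(0)=X_0$, solving $y_t=U$, $U_t=\frac12V-\frac14\lim_{\xi\to\infty}V$, $H_t=0$, $r_t=0$, with $V(\xi,t)=\int_{-\infty}^\xi H_{0,\xi}(\eta)(1-\mathbf{1}_{\{t\ge\tau(\eta)\}}\alpha(y(\eta,\tau(\eta))))d\eta$. *)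

theory Defs
  imports "HOL-Analysis.Analysis"
begin

text \<open>Functions on the real line are represented pointwise; weak derivatives are
given explicitly as functions that are a.e. derivatives of Lipschitz functions
(this characterises W^{1,infinity}).\<close>

definition bdd_fun :: "(real \<Rightarrow> real) \<Rightarrow> bool" where
  "bdd_fun f \<longleftrightarrow> (\<exists>M. \<forall>x. \<bar>f x\<bar> \<le> M)"

definition Linf :: "(real \<Rightarrow> real) \<Rightarrow> bool" where
  "Linf f \<longleftrightarrow> f \<in> borel_measurable lebesgue \<and> (\<exists>M. AE x in lebesgue. \<bar>f x\<bar> \<le> M)"

definition L2 :: "(real \<Rightarrow> real) \<Rightarrow> bool" where
  "L2 f \<longleftrightarrow> f \<in> borel_measurable lebesgue \<and> integrable lebesgue (\<lambda>x. (f x)\<^sup>2)"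

definition lip_with_deriv :: "(real \<Rightarrow> real) \<Rightarrow> (real \<Rightarrow> real) \<Rightarrow> bool" where
  "lip_with_deriv f f' \<longleftrightarrow> (\<exists>L. L-lipschitz_on UNIV f) \<and>
     (AE x in lebesgue. (f has_real_derivative f' x) (at x))"

definition in_F_alpha ::
  "(real \<Rightarrow> real) \<Rightarrow> (real \<Rightarrow> real) \<Rightarrow> (real \<Rightarrow> real) \<Rightarrow> (real \<Rightarrow> real) \<Rightarrow> (real \<Rightarrow> real)
   \<Rightarrow> (real \<Rightarrow> real) \<Rightarrow> (real \<Rightarrow> real) \<Rightarrow> (real \<Rightarrow> real) \<Rightarrow> (real \<Rightarrow> real) \<Rightarrow> (real \<Rightarrow> real) \<Rightarrow> bool" where
  "in_F_alpha \<alpha> y U H r V y' U' H' V' \<longleftrightarrow>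
     \<comment> \<open>(y - id, U, H, r, V) \<in> B and (i)\<close>
     bdd_fun (\<lambda>x. y x - x) \<and> bdd_fun U \<and> bdd_fun H \<and> bdd_fun V \<and>
     lip_with_deriv y y' \<and> lip_with_deriv U U' \<and> lip_with_deriv H H' \<and> lip_with_deriv V V' \<and>
     L2 (\<lambda>x. y' x - 1) \<and> L2 U' \<and> L2 H' \<and> L2 V' \<and> L2 r \<and> Linf r \<and>
     (H \<longlongrightarrow> 0) at_bot \<and> (V \<longlongrightarrow> 0) at_bot \<and>
     \<comment> \<open>(ii)\<close>
     (AE x in lebesgue. y' x \<ge> 0 \<and> H' x \<ge> 0) \<and>
     (\<exists>c'>0. AE x in lebesgue. y' x + H' x > c') \<and>
     \<comment> \<open>(iii)\<close>
     (AE x in lebesgue. y' x * V' x = (U' x)\<^sup>2 + (r x)\<^sup>2) \<and>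
     \<comment> \<open>(iv)\<close>
     (AE x in lebesgue. 0 \<le> V' x \<and> V' x \<le> H' x) \<and>
     \<comment> \<open>(v)\<close>
     ((\<forall>x. 0 \<le> \<alpha> x \<and> \<alpha> x < 1) \<longrightarrow>
        (\<exists>\<kappa>::real \<Rightarrow> real. (\<forall>s. 0 < \<kappa> s \<and> \<kappa> s \<le> 1) \<and>
           (AE x in lebesgue. V' x = \<kappa> (y x) * H' x \<and>
              ((U' x < 0 \<or> r x \<noteq> 0) \<longrightarrow> \<kappa> (y x) = 1)))) \<and>
     \<comment> \<open>(vi)\<close>
     ((\<forall>x. \<alpha> x = 1) \<longrightarrow>
        (AE x in lebesgue. (y' x = 0 \<longrightarrow> V' x = 0) \<and> (y' x > 0 \<longrightarrow> V' x = H' x)))"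

definition breaking_time ::
  "(real \<Rightarrow> real) \<Rightarrow> (real \<Rightarrow> real) \<Rightarrow> (real \<Rightarrow> real) \<Rightarrow> (real \<Rightarrow> real) \<Rightarrow> real \<Rightarrow> ereal" where
  "breaking_time y' U' H' r \<xi> =
     (if y' \<xi> = 0 then 0
      else if r \<xi> = 0 \<and> U' \<xi> < 0 then ereal (- 2 * U' \<xi> / H' \<xi>)
      else \<infinity>)"

end

theory Submission
  imports Defs
begin


lemma seq_deriv:
  fixes F :: "real \<Rightarrow> real"
  assumes "(F has_real_derivative D) (at x within S)" "\<And>k. x + 1/real(Suc k) \<in> S"
  shows "(\<lambda>k. (F (x + 1/real(Suc k)) - F x) * real (Suc k)) \<longlonglongrightarrow> D"
proof -
  have lim: "((\<lambda>y. (F y - F x)/(y - x)) \<longlongrightarrow> D) (at x within S)"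
    using assms(1) has_field_derivative_iff by blast
  have t0: "(\<lambda>k. 1/real(Suc k)) \<longlonglongrightarrow> 0"
    using LIMSEQ_Suc[OF lim_inverse_n'] by simp
  have "(\<lambda>k. x + 1/real(Suc k)) \<longlonglongrightarrow> x + 0"
    by (intro tendsto_add tendsto_const t0)
  then have fl: "filterlim (\<lambda>k. x + 1/real(Suc k)) (at x within S) sequentially"
    unfolding filterlim_at using assms(2) by auto
  have "(\<lambda>k. (F (x + 1/real(Suc k)) - F x)/((x + 1/real(Suc k)) - x)) \<longlonglongrightarrow> D"
    using filterlim_compose[OF lim fl] by (simp add: o_def)
  then show ?thesis by (simp add: field_simps)
qed



lemma lip_ftc:
  fixes f f' :: "real \<Rightarrow> real"
  assumes L: "L-lipschitz_on UNIV f"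
    and d: "AE x in lebesgue. (f has_real_derivative f' x) (at x)"
    and ab: "a \<le> b"
  shows "(f' has_integral (f b - f a)) {a..b}"
proof -
  obtain N where N: "{x \<in> space lebesgue. \<not> (f has_real_derivative f' x) (at x)} \<subseteq> N"
    "N \<in> null_sets lebesgue"
  proof -
    from d obtain N where "{x \<in> space lebesgue. \<not> (f has_real_derivative f' x) (at x)} \<subseteq> N"
      "emeasure lebesgue N = 0" "N \<in> sets lebesgue" by (rule AE_E)
    then show ?thesis using that by (simp add: null_sets_def)
  qed
  have negN: "negligible N" using N(2) by (simp add: negligible_iff_null_sets)
  define T where "T = {a..b} - N"
  define g where "g k x = (f (x + 1/real(Suc k)) - f x) * real (Suc k)" for k x
  have cont: "continuous_on UNIV f" using L lipschitz_on_continuous_on by blast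
  have L0: "0 \<le> L" using L lipschitz_on_nonneg by blast
  have gcont: "continuous_on UNIV (g k)" for k
    unfolding g_def by (intro continuous_intros continuous_on_compose2[OF cont]) auto
  have negdiff: "negligible ({a..b} - T \<union> (T - {a..b}))"
    unfolding T_def by (rule negligible_subset[OF negN]) auto
  have gint: "g k integrable_on T" for k
    using integrable_spike_set_eq[OF negdiff] integrable_continuous_interval[OF continuous_on_subset[OF gcont]]
    by blast
  have bound: "norm (g k x) \<le> L" for k x
  proof -
    have "dist (f (x + 1/real(Suc k))) (f x) \<le> L * dist (x + 1/real(Suc k)) x"
      using lipschitz_onD[OF L] by blast
    then have "\<bar>f (x + 1/real(Suc k)) - f x\<bar> \<le> L / real (Suc k)"
      by (simp add: dist_real_def)
    then have "\<bar>f (x + 1/real(Suc k)) - f x\<bar> * real (Suc k) \<le> L"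
      by (simp add: field_simps)
    then show ?thesis unfolding g_def by (simp add: abs_mult)
  qed
  have conv: "(\<lambda>k. g k x) \<longlonglongrightarrow> f' x" if "x \<in> T" for x
  proof -
    have "(f has_real_derivative f' x) (at x)" using that N(1) unfolding T_def by auto
    then show ?thesis unfolding g_def by (rule seq_deriv) auto
  qed
  have Lint: "(\<lambda>x. L) integrable_on T"
    using integrable_spike_set_eq[OF negdiff] integrable_const_ivl by blast
  from dominated_convergence[of g T "\<lambda>x. L" f', OF gint Lint bound conv]
  have f'int: "f' integrable_on T" and lim: "(\<lambda>k. integral T (g k)) \<longlonglongrightarrow> integral T f'"
    by auto
  define F where "F x = integral {a..x} f" for x
  have fint: "f integrable_on {u..v}" for u v
    by (rule integrable_continuous_interval, rule continuous_on_subset[OF cont]) auto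
  have dF: "(F has_real_derivative f x) (at x within {a..b+1})" if "x \<in> {a..b+1}" for x
    unfolding F_def by (rule integral_has_real_derivative[OF continuous_on_subset[OF cont] that]) auto
  have gT: "integral T (g k) = (F (b + 1/real(Suc k)) - F b) * real (Suc k)
                 - (F (a + 1/real(Suc k)) - F a) * real (Suc k)" for k
  proof -
    define h where "h = 1/real(Suc k)"
    have h0: "0 < h" unfolding h_def by simp
    have "integral T (g k) = integral {a..b} (g k)"
      by (rule integral_spike_set; rule negligible_subset[OF negN]) (auto simp: T_def)
    also have "\<dots> = (integral {a..b} (\<lambda>x. f (x + h)) - integral {a..b} f) * real (Suc k)"
      unfolding g_def h_def
      by (subst integral_mult_left, subst integral_diff) (auto intro!: fint
          integrable_continuous_interval continuous_on_compose2[OF cont] continuous_intros)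
    also have "integral {a..b} (\<lambda>x. f (x + h)) = integral {a+h..b+h} f"
      using integral_shift_real_ivl[where a="a+h" and c=h and b="b+h" and f=f] by simp
    also have "\<dots> = F (b+h) - F (a+h)"
      unfolding F_def using Henstock_Kurzweil_Integration.integral_combine[where a=a and c="a+h" and b="b+h" and f=f] fint ab h0 by simp
    finally show ?thesis unfolding F_def h_def by (simp add: algebra_simps)
  qed
  have "(\<lambda>k. (F (b + 1/real(Suc k)) - F b) * real (Suc k)
                 - (F (a + 1/real(Suc k)) - F a) * real (Suc k)) \<longlonglongrightarrow> f b - f a"
  proof (intro tendsto_diff)
    have p: "0 \<le> 1/real(Suc k)" "1/real(Suc k) \<le> 1" for k by simp_all
    show "(\<lambda>k. (F (b + 1/real(Suc k)) - F b) * real (Suc k)) \<longlonglongrightarrow> f b"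
      using ab p by (intro seq_deriv[OF dF]) (auto simp del: of_nat_Suc intro: add_increasing2)
    show "(\<lambda>k. (F (a + 1/real(Suc k)) - F a) * real (Suc k)) \<longlonglongrightarrow> f a"
      using ab p by (intro seq_deriv[OF dF]) (auto simp del: of_nat_Suc intro: add_mono)
  qed
  with lim gT have "integral T f' = f b - f a"
    using LIMSEQ_unique by auto
  with f'int have "(f' has_integral (f b - f a)) T" by (metis has_integral_integral)
  then show ?thesis
  proof -
    have "(f' has_integral (f b - f a)) T \<longleftrightarrow> (f' has_integral (f b - f a)) {a..b}"
      by (rule has_integral_spike_set_eq; rule negligible_subset[OF negN]) (auto simp: T_def)
    then show ?thesis using \<open>(f' has_integral (f b - f a)) T\<close> by blast
  qed
qed



lemma pointwise_bound:
  fixes y' U' H' r c t :: real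
  assumes "0 \<le> y'" "0 \<le> H'" "y' * H' = U'\<^sup>2 + r\<^sup>2" "c \<le> y' + H'" "0 \<le> t" "0 < c"
    and bt: "(if y' = 0 then 0 else if r = 0 \<and> U' < 0 then ereal (- 2 * U' / H') else \<infinity>) \<le> ereal t"
  shows "c / (1 + t\<^sup>2/4) \<le> H'"
proof -
  have pos: "0 < 1 + t\<^sup>2/4" by (simp add: add_pos_nonneg)
  have key: "c \<le> (1 + t\<^sup>2/4) * H'"
  proof (cases "y' = 0")
    case True
    then have "c \<le> H'" using assms by simp
    moreover have "H' \<le> (1 + t\<^sup>2/4) * H'" using assms(2) by (simp add: mult_le_cancel_right1)
    ultimately show ?thesis by linarith
  next
    case False
    then have r: "r = 0" and U: "U' < 0" and le: "- 2 * U' / H' \<le> t"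
      using bt by (auto split: if_splits)
    have "H' \<noteq> 0"
    proof
      assume "H' = 0"
      then have "U'\<^sup>2 = 0" using assms(3) r by simp
      then show False using U by simp
    qed
    then have Hp: "0 < H'" using assms(2) by simp
    have "- 2 * U' / H' * H' \<le> t * H'" using le Hp by (intro mult_right_mono) auto
    then have "- 2 * U' \<le> t * H'" using Hp by simp
    then have "- U' \<le> t * H' / 2" by simp
    then have "(- U')\<^sup>2 \<le> (t * H' / 2)\<^sup>2" using U by (intro power_mono) auto
    then have "y' * H' \<le> (t\<^sup>2/4 * H') * H'" using assms(3) r by (simp add: power2_eq_square field_simps)
    then have "y' \<le> t\<^sup>2/4 * H'" using Hp by simp
    then show ?thesis using assms(4) by (simp add: algebra_simps)
  qed
  then show ?thesis using pos by (simp add: divide_le_eq mult.commute)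
qed



theorem corollary2p4:
  fixes \<alpha> y0 U0 H0 r0 y0' U0' H0' :: "real \<Rightarrow> real" and c t :: real
  assumes alpha_W: "bdd_fun \<alpha>" "\<exists>L. L-lipschitz_on UNIV \<alpha>"
    and alpha_range: "(\<forall>x. 0 \<le> \<alpha> x \<and> \<alpha> x < 1) \<or> (\<forall>x. \<alpha> x = 1)"
    and X0: "in_F_alpha \<alpha> y0 U0 H0 r0 H0 y0' U0' H0' H0'"
    and c_pos: "c > 0"
    and c_le: "AE \<xi> in lebesgue. c \<le> y0' \<xi> + H0' \<xi>"
    and t: "t \<ge> 0"
  shows "emeasure lebesgue {\<xi>. breaking_time y0' U0' H0' r0 \<xi> \<le> ereal t}
           \<le> ennreal ((1 + t\<^sup>2 / 4) / c * (SUP \<xi>. \<bar>H0 \<xi>\<bar>))"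
proof -
  define S where "S = {\<xi>. breaking_time y0' U0' H0' r0 \<xi> \<le> ereal t}"
  define k where "k = c / (1 + t\<^sup>2/4)"
  define M where "M = (SUP \<xi>. \<bar>H0 \<xi>\<bar>)"
  have bddH: "bdd_fun H0" and lipH: "lip_with_deriv H0 H0'" and Hlim: "(H0 \<longlongrightarrow> 0) at_bot"
    and ae1: "AE x in lebesgue. y0' x \<ge> 0 \<and> H0' x \<ge> 0"
    and ae3: "AE x in lebesgue. y0' x * H0' x = (U0' x)\<^sup>2 + (r0 x)\<^sup>2"
    using X0 unfolding in_F_alpha_def by blast+
  obtain B where B: "\<And>x. \<bar>H0 x\<bar> \<le> B" using bddH unfolding bdd_fun_def by blast
  have bdd: "bdd_above (range (\<lambda>\<xi>. \<bar>H0 \<xi>\<bar>))" by (rule bdd_aboveI[where M=B]) (use B in auto)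
  have HM: "\<bar>H0 x\<bar> \<le> M" for x unfolding M_def by (rule cSUP_upper[OF _ bdd]) simp
  have M0: "0 \<le> M" using HM[of 0] by simp
  have pos: "0 < 1 + t\<^sup>2/4" by (simp add: add_pos_nonneg)
  have kpos: "0 < k" unfolding k_def using c_pos pos by simp
  have goal_eq: "(1 + t\<^sup>2 / 4) / c * M = M / k" unfolding k_def by simp
  have "emeasure lebesgue S \<le> ennreal (M / k)"
  proof (cases "S \<in> sets lebesgue")
    case False
    then show ?thesis by (simp add: emeasure_notin_sets)
  next
    case True
    obtain L where L: "L-lipschitz_on UNIV H0"
      and dH: "AE x in lebesgue. (H0 has_real_derivative H0' x) (at x)"
      using lipH unfolding lip_with_deriv_def by blast
    define h where "h x = max 0 (H0' x)" for x
    have hint: "(h has_integral (H0 b - H0 a)) {a..b}" if "a \<le> b" for a b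
    proof -
      have i: "(H0' has_integral (H0 b - H0 a)) {a..b}" by (rule lip_ftc[OF L dH that])
      from ae1 obtain N where N: "{x \<in> space lebesgue. \<not> (0 \<le> y0' x \<and> 0 \<le> H0' x)} \<subseteq> N"
        "emeasure lebesgue N = 0" "N \<in> sets lebesgue" by (rule AE_E)
      have "negligible N" using N by (simp add: negligible_iff_null_sets null_sets_def)
      then show ?thesis
      proof (rule has_integral_spike[OF _ _ i])
        fix x assume "x \<in> {a..b} - N"
        then have "x \<notin> {x \<in> space lebesgue. \<not> (0 \<le> y0' x \<and> 0 \<le> H0' x)}" using N(1) by blast
        then show "h x = H0' x" unfolding h_def by simp
      qed
    qed
    have ptw: "AE x in lebesgue. x \<in> S \<longrightarrow> k \<le> H0' x"
      using ae1 ae3 c_le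
    proof eventually_elim
      case (elim x)
      show ?case
      proof
        assume "x \<in> S"
        then have bt: "(if y0' x = 0 then 0 else if r0 x = 0 \<and> U0' x < 0
                     then ereal (- 2 * U0' x / H0' x) else \<infinity>) \<le> ereal t"
          unfolding S_def breaking_time_def by simp
        show "k \<le> H0' x" unfolding k_def
          by (rule pointwise_bound[OF _ _ _ _ t c_pos bt]) (use elim in auto)
      qed
    qed
    define Sn where "Sn n = S \<inter> {- real n .. real n}" for n
    have Sn_meas: "Sn n \<in> sets lebesgue" for n unfolding Sn_def using True by auto
    have bound_n: "emeasure lebesgue (Sn n) \<le> ennreal ((M - H0 (- real n)) / k)" for n
    proof -
      have "ennreal k * emeasure lebesgue (Sn n) = (\<integral>\<^sup>+x. ennreal k * indicator (Sn n) x \<partial>lebesgue)"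
        by (rule nn_integral_cmult_indicator[symmetric, OF Sn_meas])
      also have "\<dots> \<le> (\<integral>\<^sup>+x. ennreal (h x) * indicator {- real n .. real n} x \<partial>lebesgue)"
        using ptw
      proof (rule nn_integral_mono_AE[OF eventually_mono])
        fix x assume x: "x \<in> S \<longrightarrow> k \<le> H0' x"
        show "ennreal k * indicator (Sn n) x \<le> ennreal (h x) * indicator {- real n .. real n} x"
          using x unfolding Sn_def h_def by (auto simp: indicator_def intro!: ennreal_leI)
      qed
      also have "\<dots> = (\<integral>\<^sup>+x. ennreal (h x) * indicator {- real n .. real n} x \<partial>lborel)"
        by (simp add: nn_integral_completion)
      also have "\<dots> = ennreal (H0 (real n) - H0 (- real n))"
        by (rule nn_integral_has_integral_lebesgue'[OF _ hint]) (auto simp: h_def)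
      also have "\<dots> \<le> ennreal (M - H0 (- real n))" using HM[of "real n"] by (intro ennreal_leI) auto
      finally have A: "ennreal k * emeasure lebesgue (Sn n) \<le> ennreal (M - H0 (- real n))" .
      have v0: "0 \<le> M - H0 (- real n)" using HM[of "- real n"] by auto
      have "emeasure lebesgue (Sn n) = ennreal (1/k) * (ennreal k * emeasure lebesgue (Sn n))"
        using kpos by (simp add: mult.assoc[symmetric] ennreal_mult[symmetric])
      also have "\<dots> \<le> ennreal (1/k) * ennreal (M - H0 (- real n))"
        by (rule mult_left_mono[OF A]) simp
      also have "\<dots> = ennreal ((M - H0 (- real n)) / k)"
        using kpos v0 by (simp add: ennreal_mult[symmetric])
      finally show ?thesis .
    qed
    have inc: "incseq Sn" unfolding incseq_def Sn_def by auto
    have US: "(\<Union>n. Sn n) = S"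
    proof (rule set_eqI, rule iffI)
      fix x assume "x \<in> S"
      obtain n :: nat where "\<bar>x\<bar> \<le> real n" using real_arch_simple by blast
      then have "x \<in> Sn n" using \<open>x \<in> S\<close> unfolding Sn_def by auto
      then show "x \<in> (\<Union>n. Sn n)" by blast
    qed (auto simp: Sn_def)
    have "emeasure lebesgue S = (SUP n. emeasure lebesgue (Sn n))"
    proof -
      have "range Sn \<subseteq> sets lebesgue" using Sn_meas by blast
      from SUP_emeasure_incseq[OF this inc] US show ?thesis by simp
    qed
    also have "\<dots> \<le> ennreal (M / k)"
    proof (rule SUP_least)
      fix n
      show "emeasure lebesgue (Sn n) \<le> ennreal (M/k)"
      proof (rule ennreal_le_epsilon)
        fix e :: real assume e: "0 < e"
        have "eventually (\<lambda>x. dist (H0 x) 0 < e * k) at_bot"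
          using tendstoD[OF Hlim] e kpos by simp
        then obtain x0 where x0: "\<And>x. x \<le> x0 \<Longrightarrow> \<bar>H0 x\<bar> < e * k"
          by (auto simp: eventually_at_bot_linorder)
        define m where "m = max n (nat \<lceil>- x0\<rceil>)"
        have m1: "n \<le> m" unfolding m_def by simp
        have m2: "- real m \<le> x0" unfolding m_def by linarith
        have "emeasure lebesgue (Sn n) \<le> emeasure lebesgue (Sn m)"
          by (rule emeasure_mono[OF _ Sn_meas]) (use m1 in \<open>auto simp: Sn_def\<close>)
        also have "\<dots> \<le> ennreal ((M - H0 (- real m)) / k)" by (rule bound_n)
        also have "\<dots> \<le> ennreal (M/k + e)"
        proof (rule ennreal_leI)
          have "- H0 (- real m) \<le> e * k" using x0[OF m2] by auto
          then have "M - H0 (- real m) \<le> (M/k + e) * k" using kpos by (simp add: algebra_simps)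
          then show "(M - H0 (- real m)) / k \<le> M/k + e" using kpos by (simp add: divide_le_eq)
        qed
        also have "\<dots> = ennreal (M/k) + ennreal e" using M0 kpos e by simp
        finally show "emeasure lebesgue (Sn n) \<le> ennreal (M/k) + ennreal e" .
      qed
    qed
    finally show ?thesis .
  qed
  then show ?thesis unfolding S_def M_def[symmetric] goal_eq .
qed

end
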